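(* For every constant $\delta>0$ there exists an instance of correlation clustering on a complete bipartite graph for which the ratio between the minimum cost of a clustering and the optimal value of the LP relaxation is at least $3-\delta$.
   Context: Complete bipartite correlation clustering: $V=V_1\cup V_2$ (disjoint); each pair in $V_1\times V_2$ is a positive edge ($E^+$) or negative edge ($E^-$); pairs inside $V_1$ or inside $V_2$ are not edges. The cost of a clustering (partition of $V$) is the number of positive edges with endpoints in different clusters plus the number of negative edges with endpoints in the same cluster. LP relaxation: variables $x_{uv}=x_{vu}\in[0,1]$ for all $u,v\in V$, $x_{uu}=0$, $x_{uv}+x_{vw}\ge x_{uw}$ for all $u,v,w\in V$; minimize $\sum_{E^+}x_{uv}+\sum_{E^-}(1-x_{uv})$. The integrality gap of an instance is the minimum clustering cost divided by the LP optimum. *)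

theory Defs
  imports Main "HOL-Library.Disjoint_Sets" "HOL-Analysis.Analysis"
begin

text \<open>Each edge is represented once as (u,v)
  with u \<in> V1, v \<in> V2.\<close>

definition bcc_instance :: "nat set \<Rightarrow> nat set \<Rightarrow> (nat \<times> nat) set \<Rightarrow> bool" where
  "bcc_instance V1 V2 Ep \<longleftrightarrow> finite V1 \<and> finite V2 \<and> V1 \<inter> V2 = {} \<and> Ep \<subseteq> V1 \<times> V2"

definition neg_edges :: "nat set \<Rightarrow> nat set \<Rightarrow> (nat \<times> nat) set \<Rightarrow> (nat \<times> nat) set" where
  "neg_edges V1 V2 Ep = (V1 \<times> V2) - Ep"

definition same_cluster :: "nat set set \<Rightarrow> nat \<Rightarrow> nat \<Rightarrow> bool" where
  "same_cluster P u v \<longleftrightarrow> (\<exists>C\<in>P. u \<in> C \<and> v \<in> C)"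

definition cc_cost :: "nat set \<Rightarrow> nat set \<Rightarrow> (nat \<times> nat) set \<Rightarrow> nat set set \<Rightarrow> real" where
  "cc_cost V1 V2 Ep P =
     real (card {(u,v) \<in> Ep. \<not> same_cluster P u v})
   + real (card {(u,v) \<in> neg_edges V1 V2 Ep. same_cluster P u v})"

definition min_cc_cost :: "nat set \<Rightarrow> nat set \<Rightarrow> (nat \<times> nat) set \<Rightarrow> real" where
  "min_cc_cost V1 V2 Ep = Inf {cc_cost V1 V2 Ep P | P. partition_on (V1 \<union> V2) P}"

definition lp_feasible :: "nat set \<Rightarrow> (nat \<Rightarrow> nat \<Rightarrow> real) \<Rightarrow> bool" where
  "lp_feasible V x \<longleftrightarrow>
     (\<forall>u\<in>V. \<forall>v\<in>V. x u v = x v u \<and> 0 \<le> x u v \<and> x u v \<le> 1) \<and>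
     (\<forall>u\<in>V. x u u = 0) \<and>
     (\<forall>u\<in>V. \<forall>v\<in>V. \<forall>w\<in>V. x u v + x v w \<ge> x u w)"

definition lp_obj :: "nat set \<Rightarrow> nat set \<Rightarrow> (nat \<times> nat) set \<Rightarrow> (nat \<Rightarrow> nat \<Rightarrow> real) \<Rightarrow> real" where
  "lp_obj V1 V2 Ep x = (\<Sum>(u,v)\<in>Ep. x u v) + (\<Sum>(u,v)\<in>neg_edges V1 V2 Ep. 1 - x u v)"

definition lp_opt :: "nat set \<Rightarrow> nat set \<Rightarrow> (nat \<times> nat) set \<Rightarrow> real" where
  "lp_opt V1 V2 Ep = Inf {lp_obj V1 V2 Ep x | x. lp_feasible (V1 \<union> V2) x}"

end

theory Submission
  imports Defs
begin

lemma sidon0: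
  assumes "1 + (2::nat)^d = 2^b + 2^c"
  shows "(b = 0 \<and> d = c) \<or> (c = 0 \<and> d = b)"
proof (cases "b = 0")
  case True then show ?thesis using assms by simp
next
  case b: False
  show ?thesis
  proof (cases "c = 0")
    case True then show ?thesis using assms by simp
  next
    case c: False
    have ev: "even ((2::nat)^b + 2^c)" using b c by simp
    show ?thesis
    proof (cases "d = 0")
      case True
      have "(2::nat)^b \<ge> 2" "(2::nat)^c \<ge> 2" using b c
        by (metis One_nat_def Suc_leI neq0_conv power_increasing power_one_right one_le_numeral)+
      then show ?thesis using assms True by simp
    next
      case False
      then have "odd (1 + (2::nat)^d)" by simp
      then have "odd ((2::nat)^b + 2^c)" using assms by metis
      then show ?thesis using ev by blast
    qed
  qed
qed

lemma sidon:
  "(2::nat)^a + 2^d = 2^b + 2^c \<Longrightarrow> (a = b \<and> d = c) \<or> (a = c \<and> d = b)"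
proof (induction a arbitrary: b c d)
  case 0
  then show ?case using sidon0[of d b c] by auto
next
  case (Suc a)
  show ?case
  proof (cases "d = 0")
    case True
    then show ?thesis using sidon0[of "Suc a" b c] Suc.prems by (auto simp: add.commute)
  next
    case d: False
    show ?thesis
    proof (cases "b = 0")
      case True
      then show ?thesis using sidon0[of c "Suc a" d] Suc.prems by (auto simp: add.commute)
    next
      case b: False
      show ?thesis
      proof (cases "c = 0")
        case True
        then show ?thesis using sidon0[of b "Suc a" d] Suc.prems by (auto simp: add.commute)
      next
        case c: False
        obtain d' b' c' where "d = Suc d'" "b = Suc b'" "c = Suc c'" using b c d
          by (metis not0_implies_Suc)
        then have "(2::nat)^a + 2^d' = 2^b' + 2^c'" using Suc.prems by simp
        from Suc.IH[OF this] show ?thesis using \<open>d = Suc d'\<close> \<open>b = Suc b'\<close> \<open>c = Suc c'\<close> by auto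
      qed
    qed
  qed
qed

lemma pointwise:
  fixes a d :: int
  assumes "0 \<le> d" "d \<le> a"
  shows "a * (2*d - a) \<le> 4 * (d*d - d) + 2*a"
proof -
  have "4 * (d*d - d) + 2*a - a * (2*d - a) = (2*d-a)*(2*d-a) + 2*d*(a-2) + 2*a"
    by (simp add: algebra_simps)
  moreover have "(2*d-a)*(2*d-a) + 2*d*(a-2) + 2*a \<ge> 0"
  proof (cases "a \<ge> 2")
    case True
    then show ?thesis using assms by (simp add: mult_nonneg_nonneg)
  next
    case False
    then have "a = 0 \<or> a = 1" using assms by auto
    moreover have "a = 1 \<Longrightarrow> d = 0 \<or> d = 1" using assms by auto
    ultimately show ?thesis using assms by auto
  qed
  ultimately show ?thesis by linarith
qed

lemma cluster_bound:
  fixes Ep :: "('a \<times> 'b) set"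
  assumes fA: "finite A" and fB: "finite B"
  and c4: "\<And>u u' w w'. u \<in> A \<Longrightarrow> u' \<in> A \<Longrightarrow> w \<in> B \<Longrightarrow> w' \<in> B \<Longrightarrow> u \<noteq> u' \<Longrightarrow>
       (u,w)\<in>Ep \<Longrightarrow> (u',w)\<in>Ep \<Longrightarrow> (u,w')\<in>Ep \<Longrightarrow> (u',w')\<in>Ep \<Longrightarrow> w = w'"
  shows "2 * int (card (Ep \<inter> A \<times> B)) \<le> int (card A) * int (card B) + 4 * int (card A) + 2 * int (card B)"
proof -
  define e where "e u v = (if (u,v) \<in> Ep then 1 else 0 :: int)" for u v
  define d where "d v = (\<Sum>u\<in>A. e u v)" for v
  define a where "a = int (card A)"
  define b where "b = int (card B)"
  define p where "p = (\<Sum>v\<in>B. d v)"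
  have e01: "e u v = 0 \<or> e u v = 1" for u v by (simp add: e_def)
  have ee: "e u v * e u v = e u v" for u v by (simp add: e_def)
  have pc: "int (card (Ep \<inter> A \<times> B)) = p"
  proof -
    have "int (card (Ep \<inter> A \<times> B)) = (\<Sum>x\<in>A \<times> B. if x \<in> Ep then 1 else 0)"
    proof -
      have "Ep \<inter> A \<times> B = {x \<in> A \<times> B. x \<in> Ep}" by auto
      then have "card (Ep \<inter> A \<times> B) = (\<Sum>x\<in>{x \<in> A \<times> B. x \<in> Ep}. 1)" by simp
      also have "\<dots> = (\<Sum>x\<in>A \<times> B. if x \<in> Ep then 1 else 0)"
        using fA fB by (intro sum.inter_filter) auto
      finally show ?thesis by (simp add: of_nat_sum, intro sum.cong) auto
    qed
    also have "\<dots> = (\<Sum>u\<in>A. \<Sum>v\<in>B. e u v)"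
      by (simp add: sum.cartesian_product e_def)
    also have "\<dots> = p" unfolding p_def d_def by (rule sum.swap)
    finally show ?thesis .
  qed
  have dle: "0 \<le> d v \<and> d v \<le> a" for v
  proof -
    have "d v \<le> (\<Sum>u\<in>A. 1)" unfolding d_def by (rule sum_mono) (simp add: e_def)
    moreover have "0 \<le> d v" unfolding d_def by (rule sum_nonneg) (simp add: e_def)
    ultimately show ?thesis by (simp add: a_def)
  qed
  have common: "(\<Sum>v\<in>B. e u v * e u' v) \<le> 1" if "u \<in> A" "u' \<in> A" "u \<noteq> u'" for u u'
  proof -
    have "(\<Sum>v\<in>B. e u v * e u' v) = (\<Sum>v\<in>B. if (u,v)\<in>Ep \<and> (u',v)\<in>Ep then 1 else 0)"
      by (intro sum.cong) (auto simp: e_def)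
    also have "\<dots> = (\<Sum>v\<in>{v\<in>B. (u,v)\<in>Ep \<and> (u',v)\<in>Ep}. 1)"
      using fB by (intro sum.inter_filter[symmetric])
    also have "\<dots> = int (card {v\<in>B. (u,v)\<in>Ep \<and> (u',v)\<in>Ep})" by simp
    also have "card {v\<in>B. (u,v)\<in>Ep \<and> (u',v)\<in>Ep} \<le> 1"
      using c4[OF that(1,2) _ _ that(3)] fB by (subst One_nat_def, subst card_le_Suc0_iff_eq) auto
    finally show ?thesis by simp
  qed
  have sq: "(\<Sum>v\<in>B. d v * d v) \<le> p + a * a"
  proof -
    have "(\<Sum>v\<in>B. d v * d v) = (\<Sum>v\<in>B. \<Sum>u\<in>A. \<Sum>u'\<in>A. e u v * e u' v)"
      unfolding d_def by (simp add: sum_product)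
    also have "\<dots> = (\<Sum>u\<in>A. \<Sum>u'\<in>A. \<Sum>v\<in>B. e u v * e u' v)"
      by (simp add: sum.swap[of _ B] sum.swap[of _ B A])
    also have "\<dots> \<le> (\<Sum>u\<in>A. \<Sum>u'\<in>A. (1 + (if u = u' then (\<Sum>v\<in>B. e u v) else 0)))"
    proof (intro sum_mono)
      fix u u' assume "u \<in> A" "u' \<in> A"
      show "(\<Sum>v\<in>B. e u v * e u' v) \<le> 1 + (if u = u' then (\<Sum>v\<in>B. e u v) else 0)"
      proof (cases "u = u'")
        case True then show ?thesis by (simp add: ee)
      next
        case False then show ?thesis using common[OF \<open>u\<in>A\<close> \<open>u'\<in>A\<close>] by simp
      qed
    qed
    also have "\<dots> = (\<Sum>u\<in>A. (a + (\<Sum>v\<in>B. e u v)))"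
      using fA by (simp add: sum.distrib a_def sum.delta)
    also have "\<dots> = a * a + p"
      using pc by (simp add: sum.distrib a_def p_def d_def sum.swap[of _ A])
    finally show ?thesis by simp
  qed
  have "(\<Sum>v\<in>B. a * (2 * d v - a)) \<le> (\<Sum>v\<in>B. 4 * (d v * d v - d v) + 2*a)"
    by (rule sum_mono) (use dle pointwise in blast)
  moreover have "(\<Sum>v\<in>B. a * (2 * d v - a)) = a * (2*p - a*b)"
  proof -
    have "(\<Sum>v\<in>B. a * (2 * d v - a)) = a * (\<Sum>v\<in>B. (2 * d v - a))" by (simp add: sum_distrib_left)
    moreover have "(\<Sum>v\<in>B. (2 * d v - a)) = 2*p - a*b"
      by (simp add: sum_subtractf p_def b_def sum_distrib_left[symmetric] sum_distrib_right[symmetric] mult.commute)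
    ultimately show ?thesis by simp
  qed
  moreover have "(\<Sum>v\<in>B. 4 * (d v * d v - d v) + 2*a) = 4 * ((\<Sum>v\<in>B. d v * d v) - p) + 2*a*b"
    by (simp add: sum.distrib sum_subtractf p_def b_def sum_distrib_left[symmetric] sum_distrib_right[symmetric] mult.commute)
  ultimately have "a * (2*p - a*b) \<le> 4 * ((\<Sum>v\<in>B. d v * d v) - p) + 2*a*b" by simp
  also have "\<dots> \<le> a * (4*a + 2*b)" using sq by (simp add: algebra_simps)
  finally have key: "a * (2*p - a*b) \<le> a * (4*a + 2*b)" .
  have "2*p - a*b \<le> 4*a + 2*b"
  proof (cases "a = 0")
    case True
    then have "A = {}" using fA by (simp add: a_def)
    then have "p = 0" by (simp add: p_def d_def)
    then show ?thesis using True by (simp add: b_def)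
  next
    case False
    then have "a > 0" by (simp add: a_def)
    then show ?thesis using key by simp
  qed
  then show ?thesis using pc by (simp add: a_def b_def algebra_simps)
qed

lemma cost_lb:
  assumes inst: "bcc_instance V1 V2 Ep"
  and c4: "\<And>u u' w w'. u \<noteq> u' \<Longrightarrow> (u,w)\<in>Ep \<Longrightarrow> (u',w)\<in>Ep \<Longrightarrow> (u,w')\<in>Ep \<Longrightarrow> (u',w')\<in>Ep \<Longrightarrow> w = w'"
  and P: "partition_on (V1 \<union> V2) P"
  shows "real (card Ep) - 4 * real (card (V1 \<union> V2)) \<le> cc_cost V1 V2 Ep P"
proof -
  from inst have f1: "finite V1" "finite V2" "V1 \<inter> V2 = {}" "Ep \<subseteq> V1 \<times> V2"
    by (auto simp: bcc_instance_def)
  have UP: "\<Union>P = V1 \<union> V2" using partition_onD1[OF P] by simp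
  have fP: "finite P" using UP f1 finite_UnionD by (metis finite_Un)
  have fC: "finite C" if "C \<in> P" for C using UP f1 that by (metis Union_upper finite_Un finite_subset)
  have CV: "C \<subseteq> V1 \<union> V2" if "C \<in> P" for C using UP that by blast
  have dj: "C \<inter> C' = {}" if "C\<in>P" "C'\<in>P" "C \<noteq> C'" for C C'
    using partition_onD2[OF P] that by (auto simp: disjoint_def)
  have fE: "finite Ep" using f1 finite_subset by blast
  define p where "p C = card (Ep \<inter> C \<times> C)" for C
  define a where "a C = card (C \<inter> V1)" for C
  define b where "b C = card (C \<inter> V2)" for C
  have same: "{(u,v)\<in>Ep. same_cluster P u v} = (\<Union>C\<in>P. Ep \<inter> C\<times>C)"
    by (auto simp: same_cluster_def)
  have cs: "card {(u,v)\<in>Ep. same_cluster P u v} = (\<Sum>C\<in>P. p C)"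
    unfolding same p_def by (rule card_UN_disjoint) (use fP fC dj in blast)+
  have cut: "{(u,v)\<in>Ep. \<not> same_cluster P u v} = Ep - {(u,v)\<in>Ep. same_cluster P u v}" by auto
  have cutc: "real (card {(u,v)\<in>Ep. \<not> same_cluster P u v}) = real (card Ep) - (\<Sum>C\<in>P. real (p C))"
  proof -
    have "card {(u,v)\<in>Ep. \<not> same_cluster P u v} = card Ep - card {(u,v)\<in>Ep. same_cluster P u v}"
      unfolding cut by (rule card_Diff_subset) (auto intro: rev_finite_subset[OF fE])
    moreover have "card {(u,v)\<in>Ep. same_cluster P u v} \<le> card Ep"
      by (rule card_mono[OF fE]) auto
    ultimately show ?thesis using cs by (simp add: of_nat_diff of_nat_sum)
  qed
  have neg: "{(u,v)\<in>neg_edges V1 V2 Ep. same_cluster P u v} = (\<Union>C\<in>P. (C\<inter>V1)\<times>(C\<inter>V2) - Ep)"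
    by (auto simp: same_cluster_def neg_edges_def)
  have negc1: "card {(u,v)\<in>neg_edges V1 V2 Ep. same_cluster P u v} = (\<Sum>C\<in>P. card ((C\<inter>V1)\<times>(C\<inter>V2) - Ep))"
    unfolding neg by (rule card_UN_disjoint) (use fP fC dj in blast)+
  have pC: "Ep \<inter> C \<times> C = Ep \<inter> (C\<inter>V1)\<times>(C\<inter>V2)" for C using f1 by blast
  have negC: "real (card ((C\<inter>V1)\<times>(C\<inter>V2) - Ep)) = real (a C) * real (b C) - real (p C)" if "C \<in> P" for C
  proof -
    have fin: "finite ((C\<inter>V1)\<times>(C\<inter>V2))" using fC[OF that] by simp
    have "card ((C\<inter>V1)\<times>(C\<inter>V2) - Ep) = card ((C\<inter>V1)\<times>(C\<inter>V2)) - card ((C\<inter>V1)\<times>(C\<inter>V2) \<inter> Ep)"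
      by (rule card_Diff_subset_Int) (use fin in auto)
    moreover have "(C\<inter>V1)\<times>(C\<inter>V2) \<inter> Ep = Ep \<inter> C \<times> C" using pC by blast
    moreover have "card (Ep \<inter> C \<times> C) \<le> card ((C\<inter>V1)\<times>(C\<inter>V2))"
      by (rule card_mono[OF fin]) (use pC in blast)
    ultimately show ?thesis by (simp add: p_def a_def b_def card_cartesian_product of_nat_diff)
  qed
  have clus: "2 * real (p C) \<le> real (a C) * real (b C) + 4 * real (a C) + 2 * real (b C)" if "C \<in> P" for C
  proof -
    have "2 * int (card (Ep \<inter> (C\<inter>V1) \<times> (C\<inter>V2))) \<le> int (card (C\<inter>V1)) * int (card (C\<inter>V2)) + 4 * int (card (C\<inter>V1)) + 2 * int (card (C\<inter>V2))"
      by (rule cluster_bound) (use fC[OF that] c4 in auto)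
    then have "2 * int (p C) \<le> int (a C) * int (b C) + 4 * int (a C) + 2 * int (b C)"
      by (simp add: p_def a_def b_def pC[symmetric])
    then have "real_of_int (2 * int (p C)) \<le> real_of_int (int (a C) * int (b C) + 4 * int (a C) + 2 * int (b C))"
      by (simp only: of_int_le_iff)
    then show ?thesis by simp
  qed
  have cardC: "card C = a C + b C" if "C \<in> P" for C
  proof -
    have "C = (C \<inter> V1) \<union> (C \<inter> V2)" using CV[OF that] by blast
    then have "card C = card ((C \<inter> V1) \<union> (C \<inter> V2))" by simp
    also have "\<dots> = a C + b C" unfolding a_def b_def
      by (rule card_Un_disjoint) (use fC[OF that] f1 in auto)
    finally show ?thesis .
  qed
  have sumV: "(\<Sum>C\<in>P. real (a C) + real (b C)) = real (card (V1 \<union> V2))"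
  proof -
    have "card (V1 \<union> V2) = card (\<Union>C\<in>P. C)" using UP by simp
    also have "\<dots> = (\<Sum>C\<in>P. card C)" by (rule card_UN_disjoint) (use fP fC dj in blast)+
    also have "\<dots> = (\<Sum>C\<in>P. a C + b C)" using cardC by simp
    finally show ?thesis by (simp add: of_nat_sum sum.distrib)
  qed
  have "cc_cost V1 V2 Ep P = real (card Ep) - (\<Sum>C\<in>P. real (p C)) + (\<Sum>C\<in>P. real (a C) * real (b C) - real (p C))"
    unfolding cc_cost_def cutc negc1 using negC by (simp add: of_nat_sum)
  also have "\<dots> = real (card Ep) - (\<Sum>C\<in>P. 2 * real (p C) - real (a C) * real (b C))"
    by (simp add: sum_subtractf sum_distrib_left sum_negf)
  also have "\<dots> \<ge> real (card Ep) - (\<Sum>C\<in>P. 4 * (real (a C) + real (b C)))"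
  proof -
    have "(\<Sum>C\<in>P. 2 * real (p C) - real (a C) * real (b C)) \<le> (\<Sum>C\<in>P. 4 * (real (a C) + real (b C)))"
      by (rule sum_mono) (use clus in fastforce)
    then show ?thesis by linarith
  qed
  finally have fin: "real (card Ep) - (\<Sum>C\<in>P. 4 * (real (a C) + real (b C))) \<le> cc_cost V1 V2 Ep P" .
  have "(\<Sum>C\<in>P. 4 * (real (a C) + real (b C))) = 4 * real (card (V1 \<union> V2))"
    using sumV by (simp only: sum_distrib_left[symmetric])
  then show ?thesis using fin by linarith
qed

definition xx :: "(nat \<times> nat) set \<Rightarrow> nat \<Rightarrow> nat \<Rightarrow> real" where
  "xx Ep u v = (if u = v then 0 else if (u,v)\<in>Ep \<or> (v,u)\<in>Ep then 1/3
     else if (\<exists>w. ((u,w)\<in>Ep \<or> (w,u)\<in>Ep) \<and> ((w,v)\<in>Ep \<or> (v,w)\<in>Ep)) then 2/3 else 1)"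

lemma xx_feasible: "lp_feasible V (xx Ep)"
proof -
  define adj where "adj u v = ((u,v)\<in>Ep \<or> (v,u)\<in>Ep)" for u v
  have xd: "xx Ep u v = (if u = v then 0 else if adj u v then 1/3
     else if (\<exists>w. adj u w \<and> adj w v) then 2/3 else 1)" for u v
    unfolding xx_def adj_def by simp
  have e1: "adj u v = adj v u" for u v unfolding adj_def by blast
  have e2: "(\<exists>w. adj u w \<and> adj w v) = (\<exists>w. adj v w \<and> adj w u)" for u v using e1 by blast
  have sym: "xx Ep u v = xx Ep v u" for u v
    unfolding xd using e1[of u v] e2[of u v] by (simp add: eq_commute[of u v])
  have rng: "0 \<le> xx Ep u v \<and> xx Ep u v \<le> 1" for u v unfolding xd by auto
  have low: "u \<noteq> v \<Longrightarrow> xx Ep u v \<ge> 1/3" for u v unfolding xd by auto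
  have third: "u \<noteq> v \<Longrightarrow> xx Ep u v \<noteq> 1/3 \<Longrightarrow> xx Ep u v \<ge> 2/3" for u v unfolding xd by auto
  have is3: "xx Ep u v = 1/3 \<Longrightarrow> adj u v" for u v unfolding xd by (auto split: if_splits)
  have tri: "xx Ep u w \<le> xx Ep u v + xx Ep v w" for u v w
  proof (cases "u = w")
    case True then show ?thesis using rng[of u v] rng[of v w] by (simp add: xd)
  next
    case uw: False
    show ?thesis
    proof (cases "v = u \<or> v = w")
      case True then show ?thesis using rng[of u w] by (auto simp: xd)
    next
      case False
      then have a: "xx Ep u v \<ge> 1/3" "xx Ep v w \<ge> 1/3" using low by auto
      show ?thesis
      proof (cases "xx Ep u v = 1/3 \<and> xx Ep v w = 1/3")
        case True
        then have "adj u v" "adj v w" using is3 by auto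
        then have "xx Ep u w \<le> 2/3" unfolding xd by auto
        then show ?thesis using True by simp
      next
        case F2: False
        then have "xx Ep u v + xx Ep v w \<ge> 1" using a third[of u v] third[of v w] False by auto
        then show ?thesis using rng[of u w] by linarith
      qed
    qed
  qed
  have diag: "xx Ep u u = 0" for u by (simp add: xd)
  show ?thesis unfolding lp_feasible_def
  proof (intro conjI ballI)
    fix u v assume "u \<in> V" "v \<in> V"
    show "xx Ep u v = xx Ep v u" by (rule sym)
    show "0 \<le> xx Ep u v" using rng[of u v] by (rule conjunct1)
    show "xx Ep u v \<le> 1" using rng[of u v] by (rule conjunct2)
  next
    fix u assume "u \<in> V" show "xx Ep u u = 0" by (rule diag)
  next
    fix u v w assume "u \<in> V" "v \<in> V" "w \<in> V"
    show "xx Ep u v + xx Ep v w \<ge> xx Ep u w" by (rule tri)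
  qed
qed

lemma lp_nonneg:
  assumes inst: "bcc_instance V1 V2 Ep" and f: "lp_feasible (V1 \<union> V2) x"
  shows "0 \<le> lp_obj V1 V2 Ep x"
proof -
  from inst have "Ep \<subseteq> V1 \<times> V2" by (simp add: bcc_instance_def)
  then have "\<forall>(u,v)\<in>Ep. 0 \<le> x u v" "\<forall>(u,v)\<in>neg_edges V1 V2 Ep. 0 \<le> 1 - x u v"
    using f by (auto simp: lp_feasible_def neg_edges_def)
  then show ?thesis unfolding lp_obj_def
    by (intro add_nonneg_nonneg sum_nonneg) auto
qed

lemma lp_upper:
  assumes inst: "bcc_instance V1 V2 Ep"
  shows "lp_opt V1 V2 Ep \<le> real (card Ep) / 3"
proof -
  from inst have f1: "finite V1" "finite V2" "V1 \<inter> V2 = {}" "Ep \<subseteq> V1 \<times> V2"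
    by (auto simp: bcc_instance_def)
  have o1: "(\<Sum>(u,v)\<in>Ep. xx Ep u v) = (\<Sum>(u,v)\<in>Ep. 1/3)"
    by (rule sum.cong) (use f1 in \<open>auto simp: xx_def\<close>)
  have o2: "(\<Sum>(u,v)\<in>neg_edges V1 V2 Ep. 1 - xx Ep u v) = (\<Sum>(u,v)\<in>neg_edges V1 V2 Ep. 0)"
  proof (rule sum.cong)
    fix z assume z: "z \<in> neg_edges V1 V2 Ep"
    obtain u v where uv: "z = (u,v)" by force
    have "u \<in> V1" "v \<in> V2" "(u,v) \<notin> Ep" using z uv by (auto simp: neg_edges_def)
    then have h: "u \<noteq> v" "(u,v) \<notin> Ep" "(v,u) \<notin> Ep" using f1 by auto
    have h2: "\<not> (\<exists>w. ((u,w)\<in>Ep \<or> (w,u)\<in>Ep) \<and> ((w,v)\<in>Ep \<or> (v,w)\<in>Ep))"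
    proof
      assume "\<exists>w. ((u,w)\<in>Ep \<or> (w,u)\<in>Ep) \<and> ((w,v)\<in>Ep \<or> (v,w)\<in>Ep)"
      then obtain w where w: "(u,w)\<in>Ep \<or> (w,u)\<in>Ep" "(w,v)\<in>Ep \<or> (v,w)\<in>Ep" by blast
      have "w \<in> V2" using w(1) \<open>u \<in> V1\<close> f1 by blast
      moreover have "w \<in> V1" using w(2) \<open>v \<in> V2\<close> f1 by blast
      ultimately show False using f1 by blast
    qed
    have "xx Ep u v = 1" unfolding xx_def using h h2 by simp
    then show "(case z of (u,v) \<Rightarrow> 1 - xx Ep u v) = (case z of (u,v) \<Rightarrow> 0)" using uv by simp
  qed simp
  have "lp_obj V1 V2 Ep (xx Ep) = real (card Ep) / 3"
    unfolding lp_obj_def o1 o2 by simp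
  moreover have "lp_opt V1 V2 Ep \<le> lp_obj V1 V2 Ep (xx Ep)"
    unfolding lp_opt_def
    by (rule cInf_lower) (use xx_feasible lp_nonneg[OF inst] in \<open>auto simp: bdd_below_def\<close>)
  ultimately show ?thesis by simp
qed

lemma lp_lower:
  assumes inst: "bcc_instance V1 V2 Ep"
  and p: "(u1,w1) \<in> Ep" "(u2,w1) \<in> Ep" "(u2,w2) \<in> Ep" "(u1,w2) \<notin> Ep" "u1 \<noteq> u2" "w1 \<noteq> w2"
  shows "1 \<le> lp_opt V1 V2 Ep"
  unfolding lp_opt_def
proof (rule cInf_greatest)
  show "{lp_obj V1 V2 Ep x |x. lp_feasible (V1 \<union> V2) x} \<noteq> {}" using xx_feasible by blast
next
  fix y assume "y \<in> {lp_obj V1 V2 Ep x |x. lp_feasible (V1 \<union> V2) x}"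
  then obtain x where y: "y = lp_obj V1 V2 Ep x" and f: "lp_feasible (V1 \<union> V2) x" by blast
  from inst have f1: "finite V1" "finite V2" "V1 \<inter> V2 = {}" "Ep \<subseteq> V1 \<times> V2"
    by (auto simp: bcc_instance_def)
  have fE: "finite Ep" using f1 finite_subset by blast
  have fN: "finite (neg_edges V1 V2 Ep)" using f1 by (simp add: neg_edges_def)
  have inV: "u1 \<in> V1" "u2 \<in> V1" "w1 \<in> V2" "w2 \<in> V2" using p f1 by auto
  have nn: "\<forall>z\<in>Ep. 0 \<le> (case z of (u,v) \<Rightarrow> x u v)"
    using f f1 by (auto simp: lp_feasible_def)
  have nn2: "\<forall>z\<in>neg_edges V1 V2 Ep. 0 \<le> (case z of (u,v) \<Rightarrow> 1 - x u v)"
    using f f1 by (auto simp: lp_feasible_def neg_edges_def)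
  have s1: "(\<Sum>(u,v)\<in>{(u1,w1),(u2,w1),(u2,w2)}. x u v) \<le> (\<Sum>(u,v)\<in>Ep. x u v)"
    by (rule sum_mono2[OF fE]) (use p nn in auto)
  have s1': "(\<Sum>(u,v)\<in>{(u1,w1),(u2,w1),(u2,w2)}. x u v) = x u1 w1 + x u2 w1 + x u2 w2"
    using p by simp
  have "(\<lambda>z. case z of (u,v) \<Rightarrow> 1 - x u v) (u1,w2) \<le> (\<Sum>(u,v)\<in>neg_edges V1 V2 Ep. 1 - x u v)"
    by (rule member_le_sum) (use nn2 fN p inV in \<open>auto simp: neg_edges_def\<close>)
  then have s2: "1 - x u1 w2 \<le> (\<Sum>(u,v)\<in>neg_edges V1 V2 Ep. 1 - x u v)" by simp
  have t1: "x u1 u2 \<le> x u1 w1 + x w1 u2" "x u1 w2 \<le> x u1 u2 + x u2 w2" "x w1 u2 = x u2 w1"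
    using f inV unfolding lp_feasible_def by blast+
  show "1 \<le> y" unfolding y lp_obj_def using s1 s1' s2 t1 by linarith
qed

definition GE :: "nat \<Rightarrow> (nat \<times> nat) set" where
  "GE m = (\<lambda>(i,k). (i, 2^m + i + 2^k)) ` ({..<(2::nat)^m} \<times> {..<m})"

lemma GE_mem: "(u, w) \<in> GE m \<longleftrightarrow> (\<exists>k<m. u < 2^m \<and> w = 2^m + u + 2^k)"
  unfolding GE_def by auto

lemma GE_inst: "bcc_instance {..<(2::nat)^m} {2^m..<3*2^m} (GE m)"
proof -
  have h: "a + (2::nat)^k < 2*2^m" if "k < m" "a < 2^m" for a k
  proof -
    have "(2::nat)^k < 2^m" using that by simp
    then show ?thesis using that by linarith
  qed
  show ?thesis unfolding bcc_instance_def by (auto simp: GE_mem h)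
qed

lemma GE_card: "card (GE m) = 2^m * m"
proof -
  have "inj_on (\<lambda>(i,k). (i, (2::nat)^m + i + 2^k)) ({..<(2::nat)^m} \<times> {..<m})"
    by (auto simp: inj_on_def)
  then show ?thesis unfolding GE_def by (simp add: card_image card_cartesian_product)
qed

lemma GE_c4:
  assumes "u \<noteq> u'" "(u,w)\<in>GE m" "(u',w)\<in>GE m" "(u,w')\<in>GE m" "(u',w')\<in>GE m"
  shows "w = w'"
proof -
  obtain a where "w = 2^m + u + 2^a" using assms(2) by (auto simp: GE_mem)
  obtain b where "w = 2^m + u' + 2^b" using assms(3) by (auto simp: GE_mem)
  obtain c where "w' = 2^m + u + 2^c" using assms(4) by (auto simp: GE_mem)
  obtain d where "w' = 2^m + u' + 2^d" using assms(5) by (auto simp: GE_mem)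
  note eqs = \<open>w = 2^m + u + 2^a\<close> \<open>w = 2^m + u' + 2^b\<close> \<open>w' = 2^m + u + 2^c\<close> \<open>w' = 2^m + u' + 2^d\<close>
  from eqs have e1: "u + 2^a = u' + (2::nat)^b" and e2: "u + 2^c = u' + (2::nat)^d" by simp_all
  then have "(2::nat)^a + 2^d = 2^b + 2^c" by linarith
  from sidon[OF this] show ?thesis
  proof
    assume "a = b \<and> d = c" then show ?thesis using e1 assms(1) by simp
  next
    assume "a = c \<and> d = b" then show ?thesis using \<open>w = 2^m + u + 2^a\<close> \<open>w' = 2^m + u + 2^c\<close> by simp
  qed
qed

lemma GE_min:
  "real (2^m * m) - 12 * real ((2::nat)^m) \<le> min_cc_cost {..<(2::nat)^m} {2^m..<3*2^m} (GE m)"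
  unfolding min_cc_cost_def
proof (rule cInf_greatest)
  define V where "V = {..<(2::nat)^m} \<union> {2^m..<3*2^m}"
  have "V \<noteq> {}" unfolding V_def by auto
  then have "partition_on V {V}" by (rule partition_on_space)
  then have "cc_cost {..<(2::nat)^m} {2^m..<3*2^m} (GE m) {V} \<in> {cc_cost {..<(2::nat)^m} {2^m..<3*2^m} (GE m) P |P. partition_on ({..<2^m} \<union> {2^m..<3*2^m}) P}"
    unfolding V_def by blast
  then show "{cc_cost {..<(2::nat)^m} {2^m..<3*2^m} (GE m) P |P. partition_on ({..<2^m} \<union> {2^m..<3*2^m}) P} \<noteq> {}"
    by blast
next
  fix y assume "y \<in> {cc_cost {..<(2::nat)^m} {2^m..<3*2^m} (GE m) P |P. partition_on ({..<2^m} \<union> {2^m..<3*2^m}) P}"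
  then obtain P where y: "y = cc_cost {..<(2::nat)^m} {2^m..<3*2^m} (GE m) P"
    and P: "partition_on ({..<2^m} \<union> {2^m..<3*2^m}) P" by blast
  have c: "real (card (GE m)) - 4 * real (card ({..<(2::nat)^m} \<union> {2^m..<3*2^m})) \<le> y"
    unfolding y by (rule cost_lb[OF GE_inst _ P]) (rule GE_c4)
  have "{..<(2::nat)^m} \<union> {2^m..<3*2^m} = {..<3*2^m}" by auto
  then have "card ({..<(2::nat)^m} \<union> {2^m..<3*2^m}) = 3*2^m" by simp
  then have "4 * real (card ({..<(2::nat)^m} \<union> {2^m..<3*2^m})) = 12 * real ((2::nat)^m)" by simp
  moreover have "real (card (GE m)) = real (2^m * m)" by (simp only: GE_card)
  ultimately show "real (2^m * m) - 12 * real ((2::nat)^m) \<le> y" using c by linarith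
qed

lemma GE_lp_lower:
  assumes "2 \<le> m"
  shows "1 \<le> lp_opt {..<(2::nat)^m} {2^m..<3*2^m} (GE m)"
proof -
  have "(2::nat)^1 < 2^m" using power_strict_increasing[of 1 m "2::nat"] assms by simp
  then have "(2::nat) < 2^m" by simp
  then have lt: "(1::nat) < 2^m" by simp
  have a1: "(1, 2^m+2) \<in> GE m" unfolding GE_mem
    by (rule exI[of _ "0::nat"]) (use assms lt in simp)
  have a2: "(0, 2^m+2) \<in> GE m" unfolding GE_mem
    by (rule exI[of _ "1::nat"]) (use assms lt in simp)
  have a3: "(0, 2^m+1) \<in> GE m" unfolding GE_mem
    by (rule exI[of _ "0::nat"]) (use assms lt in simp)
  note a = a1 a2 a3
  have b: "(1, 2^m+1) \<notin> GE m" unfolding GE_mem by simp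
  show ?thesis by (rule lp_lower[OF GE_inst a b]) simp_all
qed

theorem theorem4:
  fixes \<delta> :: real
  assumes "\<delta> > 0"
  shows "\<exists>V1 V2 Ep. bcc_instance V1 V2 Ep \<and> lp_opt V1 V2 Ep > 0 \<and>
           min_cc_cost V1 V2 Ep / lp_opt V1 V2 Ep \<ge> 3 - \<delta>"
proof -
  define m where "m = nat \<lceil>36 / \<delta>\<rceil> + 12"
  define N where "N = real ((2::nat)^m)"
  define V1 where "V1 = {..<(2::nat)^m}"
  define V2 where "V2 = {(2::nat)^m..<3*2^m}"
  define M where "M = min_cc_cost V1 V2 (GE m)"
  define L where "L = lp_opt V1 V2 (GE m)"
  have m12: "m \<ge> 12" by (simp add: m_def)
  have mge: "real m \<ge> 36 / \<delta>" unfolding m_def by linarith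
  then have dm: "\<delta> * real m \<ge> 36" using assms by (simp add: field_simps)
  have Npos: "N > 0" by (simp add: N_def)
  have L1: "1 \<le> L" unfolding L_def V1_def V2_def by (rule GE_lp_lower) (use m12 in simp)
  have cE: "real (card (GE m)) = N * real m" by (simp add: GE_card N_def)
  have Lu: "L \<le> N * real m / 3" unfolding L_def V1_def V2_def
    using lp_upper[OF GE_inst, of m] cE by simp
  have Ml: "N * real m - 12 * N \<le> M" unfolding M_def V1_def V2_def
    using GE_min[of m] cE GE_card[of m] by (simp only: N_def)
  have E0: "0 \<le> N * real m - 12 * N" using m12 Npos by (simp add: algebra_simps)
  have Epos: "0 < N * real m" using m12 Npos by simp
  have "M / L \<ge> (N * real m - 12 * N) / (N * real m / 3)"
  proof -
    have "(N * real m - 12 * N) / (N * real m / 3) \<le> (N * real m - 12 * N) / L"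
      by (rule divide_left_mono) (use E0 Lu L1 Epos in auto)
    also have "\<dots> \<le> M / L" using Ml L1 by (simp add: divide_right_mono)
    finally show ?thesis .
  qed
  moreover have "(N * real m - 12 * N) / (N * real m / 3) = 3 - 36 / real m"
    using Npos m12 by (simp add: field_simps)
  moreover have "36 / real m \<le> \<delta>" using dm m12 by (simp add: field_simps)
  ultimately have "M / L \<ge> 3 - \<delta>" by linarith
  moreover have "L > 0" using L1 by simp
  ultimately show ?thesis unfolding M_def L_def using GE_inst[of m] V1_def V2_def by blast
qed

end
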